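(* Let $G=\{g_t\}_{t\in\mathbb R}$ be a one-parameter continuous subgroup of the affine group $\mathcal G$, and let $G\ni g_t\mapsto U_t$ be a strongly continuous unitary representation of $G$ in a Hilbert space $\mathcal H$. Assume that $A$ is a maximal dissipative operator in $\mathcal H$ which is $G$-invariant with respect to this representation. Then the strongly continuous unitary group $U_t$ and the strongly continuous semigroup of contractions $V_s=e^{iAs}$, $s\ge 0$, generated by $A$ satisfy the restricted generalized Weyl commutation relations $$U_tV_s=e^{isg_t(0)}V_{g_t'(0)s}U_t,\qquad t\in\mathbb R,\ s\ge 0,$$ where $g_t'(0)=\frac{d}{dx}g_t(x)\big|_{x=0}$. Conversely, if a strongly continuous unitary group $U_t$ (with $g_t\mapsto U_t$ a representation of $G$) and a strongly continuous semigroup of contractions $V_s=e^{iAs}$, $s\ge0$, satisfy these relations, then the generator $A$ of the semigroup $V_s$ is $G$-invariant with respect to the group $G=\{g_t\}_{t\in\mathbb R}$ and its unitary representation $g_t\mapsto U_t$.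
   Context: $\mathcal G$ denotes the group (under composition) of affine maps $g(x)=ax+b$ of $\mathbb R$ with $a>0$, $b\in\mathbb R$. For an operator $A$ and $g(x)=ax+b$, $g(A)$ denotes $aA+bI$. Given a subgroup $G\subset\mathcal G$ and a unitary representation $G\ni g\mapsto U_g$ ($U_fU_g=U_{fg}$) on a separable Hilbert space, a densely defined closed operator $A$ is called $G$-invariant (with respect to this representation) if for all $g\in G$ one has $U_g(\mathrm{Dom}(A))=\mathrm{Dom}(A)$ and $U_gAU_g^*f=aAf+bf$ for all $f\in\mathrm{Dom}(A)$, where $g(x)=ax+b$. An operator $A$ is dissipative if $\operatorname{Im}(Af,f)\ge0$ for $f\in\mathrm{Dom}(A)$, and maximal dissipative if it has no proper dissipative extension. *)

theory Defs
  imports "HOL-Analysis.Analysis"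
begin

text \<open>A complex Hilbert space is encoded as a real Hilbert space (type class
real_inner + complete_space) together with an orthogonal complex structure J
(multiplication by the imaginary unit).\<close>

definition cplx_structure :: "('h::real_inner \<Rightarrow> 'h) \<Rightarrow> bool" where
  "cplx_structure J \<longleftrightarrow> linear J \<and> (\<forall>x. J (J x) = - x) \<and> (\<forall>x y. inner (J x) (J y) = inner x y)"

definition smC :: "('h::real_inner \<Rightarrow> 'h) \<Rightarrow> complex \<Rightarrow> 'h \<Rightarrow> 'h" where
  "smC J c x = Re c *\<^sub>R x + Im c *\<^sub>R J x"

text \<open>complex inner product, linear in the first, antilinear in the second argument\<close>
definition cinner :: "('h::real_inner \<Rightarrow> 'h) \<Rightarrow> 'h \<Rightarrow> 'h \<Rightarrow> complex" where
  "cinner J x y = Complex (inner x y) (inner x (J y))"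

definition separable_space :: "'h::real_inner itself \<Rightarrow> bool" where
  "separable_space _ \<longleftrightarrow> (\<exists>S::'h set. countable S \<and> closure S = UNIV)"

text \<open>A (complex-)linear operator with domain D (values of A outside D are irrelevant).\<close>
definition lin_op :: "('h::real_inner \<Rightarrow> 'h) \<Rightarrow> 'h set \<Rightarrow> ('h \<Rightarrow> 'h) \<Rightarrow> bool" where
  "lin_op J D A \<longleftrightarrow> 0 \<in> D \<and> (\<forall>x\<in>D. \<forall>y\<in>D. x + y \<in> D) \<and> (\<forall>x\<in>D. \<forall>c. smC J c x \<in> D)
     \<and> (\<forall>x\<in>D. \<forall>y\<in>D. A (x + y) = A x + A y) \<and> (\<forall>x\<in>D. \<forall>c. A (smC J c x) = smC J c (A x))"

definition densely_defined :: "'h::real_inner set \<Rightarrow> bool" where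
  "densely_defined D \<longleftrightarrow> closure D = UNIV"

definition closed_op :: "'h::real_inner set \<Rightarrow> ('h \<Rightarrow> 'h) \<Rightarrow> bool" where
  "closed_op D A \<longleftrightarrow> closed {(x, A x) | x. x \<in> D}"

definition dissipative :: "('h::real_inner \<Rightarrow> 'h) \<Rightarrow> 'h set \<Rightarrow> ('h \<Rightarrow> 'h) \<Rightarrow> bool" where
  "dissipative J D A \<longleftrightarrow> (\<forall>f\<in>D. Im (cinner J (A f) f) \<ge> 0)"

definition max_dissipative :: "('h::real_inner \<Rightarrow> 'h) \<Rightarrow> 'h set \<Rightarrow> ('h \<Rightarrow> 'h) \<Rightarrow> bool" where
  "max_dissipative J D A \<longleftrightarrow> lin_op J D A \<and> dissipative J D A \<and>
     (\<forall>D' A'. lin_op J D' A' \<and> dissipative J D' A' \<and> D \<subseteq> D' \<and> (\<forall>x\<in>D. A' x = A x) \<longrightarrow> D' = D)"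

definition unitary :: "('h::real_inner \<Rightarrow> 'h) \<Rightarrow> ('h \<Rightarrow> 'h) \<Rightarrow> bool" where
  "unitary J U \<longleftrightarrow> (\<forall>x y. U (x + y) = U x + U y) \<and> (\<forall>c x. U (smC J c x) = smC J c (U x))
     \<and> surj U \<and> (\<forall>x y. cinner J (U x) (U y) = cinner J x y)"

text \<open>An affine map x \<mapsto> a x + b (a > 0) is represented by the pair (a, b).\<close>
definition aff :: "real \<times> real \<Rightarrow> real \<Rightarrow> real" where
  "aff p x = fst p * x + snd p"

definition one_param_affine :: "(real \<Rightarrow> real \<times> real) \<Rightarrow> bool" where
  "one_param_affine g \<longleftrightarrow> (\<forall>t. fst (g t) > 0) \<and> (\<forall>t s. aff (g (t + s)) = aff (g t) \<circ> aff (g s))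
     \<and> continuous_on UNIV g"

text \<open>U t is the operator assigned to g t; well-definedness on G is required.\<close>
definition sc_unitary_rep :: "('h::real_inner \<Rightarrow> 'h) \<Rightarrow> (real \<Rightarrow> real \<times> real) \<Rightarrow> (real \<Rightarrow> 'h \<Rightarrow> 'h) \<Rightarrow> bool" where
  "sc_unitary_rep J g U \<longleftrightarrow> (\<forall>t. unitary J (U t)) \<and> (\<forall>t s. U (t + s) = U t \<circ> U s)
     \<and> (\<forall>t s. g t = g s \<longrightarrow> U t = U s) \<and> (\<forall>f. continuous_on UNIV (\<lambda>t. U t f))"

definition G_invariant :: "('h::real_inner \<Rightarrow> 'h) \<Rightarrow> (real \<Rightarrow> real \<times> real) \<Rightarrow> (real \<Rightarrow> 'h \<Rightarrow> 'h) \<Rightarrow> 'h set \<Rightarrow> ('h \<Rightarrow> 'h) \<Rightarrow> bool" where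
  "G_invariant J g U D A \<longleftrightarrow> lin_op J D A \<and> densely_defined D \<and> closed_op D A \<and>
     (\<forall>t. U t ` D = D \<and> (\<forall>f\<in>D. U t (A (inv (U t) f)) = fst (g t) *\<^sub>R A f + snd (g t) *\<^sub>R f))"

definition contraction_semigroup :: "('h::real_inner \<Rightarrow> 'h) \<Rightarrow> (real \<Rightarrow> 'h \<Rightarrow> 'h) \<Rightarrow> bool" where
  "contraction_semigroup J V \<longleftrightarrow>
     (\<forall>s\<ge>0. (\<forall>x y. V s (x + y) = V s x + V s y) \<and> (\<forall>c x. V s (smC J c x) = smC J c (V s x))
             \<and> (\<forall>x. norm (V s x) \<le> norm x))
     \<and> V 0 = id \<and> (\<forall>s\<ge>0. \<forall>r\<ge>0. V (s + r) = V s \<circ> V r)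
     \<and> (\<forall>f. continuous_on {0..} (\<lambda>s. V s f))"

text \<open>V s = exp(i A s): the infinitesimal generator of V is i A with domain D.\<close>
definition generated_by :: "('h::real_inner \<Rightarrow> 'h) \<Rightarrow> (real \<Rightarrow> 'h \<Rightarrow> 'h) \<Rightarrow> 'h set \<Rightarrow> ('h \<Rightarrow> 'h) \<Rightarrow> bool" where
  "generated_by J V D A \<longleftrightarrow>
     D = {f. \<exists>y. ((\<lambda>s. (1 / s) *\<^sub>R (V s f - f)) \<longlongrightarrow> y) (at_right 0)} \<and>
     (\<forall>f\<in>D. ((\<lambda>s. (1 / s) *\<^sub>R (V s f - f)) \<longlongrightarrow> smC J \<i> (A f)) (at_right 0))"

definition weyl_relations :: "('h::real_inner \<Rightarrow> 'h) \<Rightarrow> (real \<Rightarrow> real \<times> real) \<Rightarrow> (real \<Rightarrow> 'h \<Rightarrow> 'h) \<Rightarrow> (real \<Rightarrow> 'h \<Rightarrow> 'h) \<Rightarrow> bool" where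
  "weyl_relations J g U V \<longleftrightarrow> (\<forall>t. \<forall>s\<ge>0. \<forall>x.
     U t (V s x) = smC J (exp (\<i> * complex_of_real (s * aff (g t) 0))) (V (deriv (aff (g t)) 0 * s) (U t x)))"

end

theory Submission
  imports Defs
begin


typedef 'a wr = "UNIV :: ('a::{real_inner,complete_space}) set" by auto
setup_lifting type_definition_wr

instantiation wr :: ("{real_inner,complete_space}") real_inner
begin
lift_definition zero_wr :: "'a wr" is 0 .
lift_definition plus_wr :: "'a wr \<Rightarrow> 'a wr \<Rightarrow> 'a wr" is "(+)" .
lift_definition minus_wr :: "'a wr \<Rightarrow> 'a wr \<Rightarrow> 'a wr" is "(-)" .
lift_definition uminus_wr :: "'a wr \<Rightarrow> 'a wr" is uminus .
lift_definition scaleR_wr :: "real \<Rightarrow> 'a wr \<Rightarrow> 'a wr" is scaleR .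
lift_definition norm_wr :: "'a wr \<Rightarrow> real" is norm .
lift_definition sgn_wr :: "'a wr \<Rightarrow> 'a wr" is sgn .
lift_definition dist_wr :: "'a wr \<Rightarrow> 'a wr \<Rightarrow> real" is dist .
lift_definition inner_wr :: "'a wr \<Rightarrow> 'a wr \<Rightarrow> real" is inner .
definition uniformity_wr :: "('a wr \<times> 'a wr) filter" where
  "uniformity_wr = (INF e\<in>{0<..}. principal {(x, y). dist x y < e})"
definition open_wr :: "'a wr set \<Rightarrow> bool" where
  "open_wr U = (\<forall>x\<in>U. eventually (\<lambda>(x', y). x' = x \<longrightarrow> y \<in> U) uniformity)"
instance
proof
  show "(uniformity :: ('a wr \<times> 'a wr) filter) = (INF e\<in>{0<..}. principal {(x, y). dist x y < e})"
    by (simp add: uniformity_wr_def)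
  show "open U = (\<forall>x\<in>U. eventually (\<lambda>(x', y). x' = x \<longrightarrow> y \<in> U) uniformity)" for U :: "'a wr set"
    by (simp add: open_wr_def)
qed (transfer; simp add: algebra_simps dist_norm sgn_div_norm norm_triangle_ineq dist_triangle2 inner_add_left inner_commute norm_eq_sqrt_inner)+
end

instance wr :: ("{real_inner,complete_space}") complete_space
proof
  fix X :: "nat \<Rightarrow> 'a wr" assume "Cauchy X"
  then have "Cauchy (\<lambda>n. Rep_wr (X n))" unfolding Cauchy_def by transfer
  then obtain L where L: "(\<lambda>n. Rep_wr (X n)) \<longlonglongrightarrow> L" by (metis Cauchy_convergent convergent_def)
  have "X \<longlonglongrightarrow> Abs_wr L"
    using L unfolding LIMSEQ_def dist_wr_def by (simp add: Abs_wr_inverse)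
  then show "convergent X" by (auto simp: convergent_def)
qed

instance wr :: ("{real_inner,complete_space}") banach ..

lemma bl_Abs: "bounded_linear Abs_wr"
  by (rule bounded_linear_intro[where K=1]) (simp_all add: plus_wr_def scaleR_wr_def norm_wr_def Abs_wr_inverse)
lemma bl_Rep: "bounded_linear Rep_wr"
  by (rule bounded_linear_intro[where K=1]) (simp_all add: plus_wr_def scaleR_wr_def norm_wr_def Abs_wr_inverse)

lemma antideriv:
  fixes f :: "real \<Rightarrow> 'h::{real_inner,complete_space}"
  assumes "continuous_on {a..b} f"
  shows "\<exists>G. G a = 0 \<and> (\<forall>x\<in>{a..b}. (G has_vector_derivative f x) (at x within {a..b}))"
proof -
  have c: "continuous_on {a..b} (\<lambda>x. Abs_wr (f x))"
    by (rule continuous_on_compose2[OF linear_continuous_on[OF bl_Abs] assms]) auto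
  define G where "G u = Rep_wr (integral {a..u} (\<lambda>x. Abs_wr (f x)))" for u
  have "G a = 0" unfolding G_def by (simp add: zero_wr.rep_eq)
  moreover have "(G has_vector_derivative f x) (at x within {a..b})" if "x \<in> {a..b}" for x
    using bounded_linear.has_vector_derivative[OF bl_Rep integral_has_vector_derivative[OF c that]]
    unfolding G_def by (simp add: Abs_wr_inverse)
  ultimately show ?thesis by blast
qed



definition csg :: "(real \<Rightarrow> 'h::real_normed_vector \<Rightarrow> 'h) \<Rightarrow> bool" where
  "csg V \<longleftrightarrow> (\<forall>s\<ge>0. bounded_linear (V s) \<and> (\<forall>x. norm (V s x) \<le> norm x)) \<and> V 0 = id
     \<and> (\<forall>s\<ge>0. \<forall>r\<ge>0. V (s + r) = V s \<circ> V r) \<and> (\<forall>f. continuous_on {0..} (\<lambda>s. V s f))"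

definition dq :: "(real \<Rightarrow> 'h::real_normed_vector \<Rightarrow> 'h) \<Rightarrow> 'h \<Rightarrow> real \<Rightarrow> 'h" where
  "dq V f s = (1 / s) *\<^sub>R (V s f - f)"

definition Dom :: "(real \<Rightarrow> 'h::real_normed_vector \<Rightarrow> 'h) \<Rightarrow> 'h set" where
  "Dom V = {f. \<exists>y. (dq V f \<longlongrightarrow> y) (at_right 0)}"

definition gen :: "(real \<Rightarrow> 'h::real_normed_vector \<Rightarrow> 'h) \<Rightarrow> 'h \<Rightarrow> 'h" where
  "gen V f = Lim (at_right 0) (dq V f)"

lemma gen_tendsto: "f \<in> Dom V \<Longrightarrow> (dq V f \<longlongrightarrow> gen V f) (at_right 0)"
  unfolding Dom_def gen_def using tendsto_Lim[of "at_right (0::real)"] by auto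

lemma gen_eq: "(dq V f \<longlongrightarrow> y) (at_right 0) \<Longrightarrow> f \<in> Dom V \<and> gen V f = y"
  unfolding Dom_def gen_def using tendsto_Lim[of "at_right (0::real)"] by auto

lemma csgD:
  assumes "csg V"
  shows "s \<ge> 0 \<Longrightarrow> bounded_linear (V s)" "s \<ge> 0 \<Longrightarrow> norm (V s x) \<le> norm x" "V 0 = id"
    "s \<ge> 0 \<Longrightarrow> r \<ge> 0 \<Longrightarrow> V (s + r) x = V s (V r x)" "continuous_on {0..} (\<lambda>s. V s f)"
  using assms unfolding csg_def by auto

lemma csg_from:
  assumes "contraction_semigroup J V" shows "csg V"
proof -
  have "bounded_linear (V s)" if "s \<ge> 0" for s
  proof (rule bounded_linear_intro[where K=1])
    fix x y show "V s (x + y) = V s x + V s y" using assms that unfolding contraction_semigroup_def by auto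
  next
    fix r x
    have "V s (smC J (complex_of_real r) x) = smC J (complex_of_real r) (V s x)"
      using assms that unfolding contraction_semigroup_def by blast
    then show "V s (r *\<^sub>R x) = r *\<^sub>R V s x" by (simp add: smC_def)
  next
    fix x show "norm (V s x) \<le> norm x * 1" using assms that unfolding contraction_semigroup_def by auto
  qed
  then show ?thesis using assms unfolding contraction_semigroup_def csg_def by auto
qed

lemma csg_T:
  assumes "csg V" "(q \<longlongrightarrow> u) F" "(\<tau> \<longlongrightarrow> t0) F" "eventually (\<lambda>z. \<tau> z \<ge> 0) F" "t0 \<ge> 0"
  shows "((\<lambda>z. V (\<tau> z) (q z)) \<longlongrightarrow> V t0 u) F"
proof -
  have c: "((\<lambda>z. V (\<tau> z) u) \<longlongrightarrow> V t0 u) F"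
    by (rule continuous_on_tendsto_compose[OF csgD(5)[OF assms(1)] assms(3)]) (use assms in auto)
  have "((\<lambda>z. V (\<tau> z) (q z - u)) \<longlongrightarrow> 0) F"
  proof (rule Lim_null_comparison)
    show "eventually (\<lambda>z. norm (V (\<tau> z) (q z - u)) \<le> norm (q z - u)) F"
      using assms(4) by eventually_elim (use csgD(2)[OF assms(1)] in auto)
    show "((\<lambda>z. norm (q z - u)) \<longlongrightarrow> 0) F"
      using tendsto_norm_zero[OF LIM_zero[OF assms(2)]] .
  qed
  from tendsto_add[OF this c] have "((\<lambda>z. V (\<tau> z) (q z - u) + V (\<tau> z) u) \<longlongrightarrow> V t0 u) F" by simp
  moreover have "eventually (\<lambda>z. V (\<tau> z) (q z - u) + V (\<tau> z) u = V (\<tau> z) (q z)) F"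
    using assms(4) by eventually_elim (use csgD(1)[OF assms(1)] in \<open>simp add: linear_simps\<close>)
  ultimately show ?thesis by (rule Lim_transform_eventually)
qed

lemma ev_pos: "eventually (\<lambda>s. s > 0) (at_right (0::real))"
  by (simp add: eventually_at_right_less)

lemma fl_right: "filterlim (\<lambda>y. y - r) (at_right 0) (at_right (r::real))"
proof -
  have "((\<lambda>y. y - r) \<longlongrightarrow> 0) (at_right r)"
    by (rule tendsto_eq_intros refl)+ (auto intro: tendsto_ident_at)
  moreover have "eventually (\<lambda>y. y - r \<in> {0<..} \<and> y - r \<noteq> 0) (at_right r)"
    using eventually_at_right_less[of r] by eventually_elim auto
  ultimately show ?thesis by (simp add: filterlim_at)
qed

lemma fl_left: "filterlim (\<lambda>y. r - y) (at_right 0) (at_left (r::real))"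
proof -
  have "((\<lambda>y. r - y) \<longlongrightarrow> 0) (at_left r)"
    by (rule tendsto_eq_intros refl)+ (auto intro: tendsto_ident_at)
  moreover have "eventually (\<lambda>y. r - y \<in> {0<..} \<and> r - y \<noteq> 0) (at_left r)"
    using eventually_at_left_real[of "r - 1" r] by (auto elim: eventually_mono)
  ultimately show ?thesis by (simp add: filterlim_at)
qed

lemma vd_iff:
  fixes f :: "real \<Rightarrow> 'a::real_normed_vector"
  shows "(f has_vector_derivative f') (at x within S) \<longleftrightarrow>
    ((\<lambda>y. (1 / (y - x)) *\<^sub>R (f y - f x)) \<longlongrightarrow> f') (at x within S)"
proof -
  have bl: "bounded_linear (\<lambda>h. h *\<^sub>R f')" by (rule bounded_linear_scaleR_left)
  have ev: "eventually (\<lambda>y. norm ((f y - f x) - (y - x) *\<^sub>R f') / norm (y - x)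
     = norm ((1 / (y - x)) *\<^sub>R (f y - f x) - f')) (at x within S)"
    unfolding eventually_at_filter
  proof (rule always_eventually, intro allI impI)
    fix y assume "y \<noteq> x"
    then have "norm ((1 / (y - x)) *\<^sub>R (f y - f x) - f') = norm ((1 / (y - x)) *\<^sub>R ((f y - f x) - (y - x) *\<^sub>R f'))"
      by (simp add: scaleR_diff_right)
    also have "\<dots> = norm ((f y - f x) - (y - x) *\<^sub>R f') / norm (y - x)"
      by (simp add: divide_simps)
    finally show "norm ((f y - f x) - (y - x) *\<^sub>R f') / norm (y - x) = norm ((1 / (y - x)) *\<^sub>R (f y - f x) - f')" by simp
  qed
  have "(f has_vector_derivative f') (at x within S) \<longleftrightarrow>
     ((\<lambda>y. norm ((f y - f x) - (y - x) *\<^sub>R f') / norm (y - x)) \<longlongrightarrow> 0) (at x within S)"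
    unfolding has_vector_derivative_def has_derivative_iff_norm using bl by simp
  also have "\<dots> \<longleftrightarrow> ((\<lambda>y. norm ((1 / (y - x)) *\<^sub>R (f y - f x) - f')) \<longlongrightarrow> 0) (at x within S)"
    by (rule tendsto_cong[OF ev])
  also have "\<dots> \<longleftrightarrow> ((\<lambda>y. (1 / (y - x)) *\<^sub>R (f y - f x)) \<longlongrightarrow> f') (at x within S)"
    by (simp add: tendsto_norm_zero_iff LIM_zero_iff)
  finally show ?thesis .
qed

lemma csg_L1:
  assumes "csg V" "f \<in> Dom V" "r \<ge> 0"
  shows "V r f \<in> Dom V \<and> gen V (V r f) = V r (gen V f)"
proof (rule gen_eq)
  have "((\<lambda>s. V r (dq V f s)) \<longlongrightarrow> V r (gen V f)) (at_right 0)"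
    by (rule bounded_linear.tendsto[OF csgD(1)[OF assms(1,3)] gen_tendsto[OF assms(2)]])
  moreover have "eventually (\<lambda>s. V r (dq V f s) = dq V (V r f) s) (at_right 0)"
    using ev_pos
  proof eventually_elim
    case (elim s)
    have "V s (V r f) = V r (V s f)"
      using csgD(4)[OF assms(1), of s r] csgD(4)[OF assms(1), of r s] elim assms(3) by (simp add: add.commute)
    then show ?case unfolding dq_def
      using csgD(1)[OF assms(1,3)] by (simp add: linear_simps)
  qed
  ultimately show "(dq V (V r f) \<longlongrightarrow> V r (gen V f)) (at_right 0)" by (rule Lim_transform_eventually)
qed

lemma csg_L2:
  assumes "csg V" "f \<in> Dom V" "r > 0"
  shows "((\<lambda>s. V s f) has_vector_derivative V r (gen V f)) (at r)"
  unfolding vd_iff filterlim_at_split[of _ _ r]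
proof
  have "((\<lambda>y. V r (dq V f (y - r))) \<longlongrightarrow> V r (gen V f)) (at_right r)"
    by (rule bounded_linear.tendsto[OF csgD(1)[OF assms(1)]])
       (use assms(3) filterlim_compose[OF gen_tendsto[OF assms(2)] fl_right] in auto)
  moreover have "eventually (\<lambda>y. V r (dq V f (y - r)) = (1 / (y - r)) *\<^sub>R (V y f - V r f)) (at_right r)"
    using eventually_at_right_less[of r]
  proof eventually_elim
    case (elim y)
    have "V y f = V r (V (y - r) f)" using csgD(4)[OF assms(1), of r "y - r"] elim assms(3) by simp
    then show ?case unfolding dq_def
      using csgD(1)[OF assms(1), of r] assms(3) by (simp add: linear_simps)
  qed
  ultimately show "((\<lambda>y. (1 / (y - r)) *\<^sub>R (V y f - V r f)) \<longlongrightarrow> V r (gen V f)) (at_right r)"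
    by (rule Lim_transform_eventually)
next
  have "((\<lambda>y. V y (dq V f (r - y))) \<longlongrightarrow> V r (gen V f)) (at_left r)"
  proof (rule csg_T[OF assms(1)])
    show "((\<lambda>y. dq V f (r - y)) \<longlongrightarrow> gen V f) (at_left r)"
      using filterlim_compose[OF gen_tendsto[OF assms(2)] fl_left] .
    show "((\<lambda>y. y) \<longlongrightarrow> r) (at_left r)" by (rule tendsto_ident_at)
    show "eventually (\<lambda>y. y \<ge> 0) (at_left r)"
      using eventually_at_left_real[of 0 r] assms(3) by (auto elim: eventually_mono)
  qed (use assms in auto)
  moreover have "eventually (\<lambda>y. V y (dq V f (r - y)) = (1 / (y - r)) *\<^sub>R (V y f - V r f)) (at_left r)"
    using eventually_at_left_real[of 0 r] assms(3)
  proof (auto elim!: eventually_mono)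
    fix y assume y: "0 < y" "y < r"
    have vr: "V r f = V y (V (r - y) f)" using csgD(4)[OF assms(1), of y "r - y"] y by simp
    have e: "1 / (y - r) = - (1 / (r - y))" using y by (simp add: field_simps)
    then show "V y (dq V f (r - y)) = (1 / (y - r)) *\<^sub>R (V y f - V r f)" unfolding dq_def
      using csgD(1)[OF assms(1), of y] y
      by (simp add: linear_simps scaleR_diff_right e vr)
  qed
  ultimately show "((\<lambda>y. (1 / (y - r)) *\<^sub>R (V y f - V r f)) \<longlongrightarrow> V r (gen V f)) (at_left r)"
    by (rule Lim_transform_eventually)
qed

lemma mvb:
  fixes \<phi> :: "real \<Rightarrow> 'h::real_inner"
  assumes "a \<le> b" "continuous_on {a..b} \<phi>"
    "\<And>x. a < x \<Longrightarrow> x < b \<Longrightarrow> (\<phi> has_vector_derivative d x) (at x)"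
    "\<And>x. a < x \<Longrightarrow> x < b \<Longrightarrow> norm (d x) \<le> B"
  shows "norm (\<phi> b - \<phi> a) \<le> B * (b - a)"
proof (cases "a = b")
  case True then show ?thesis by simp
next
  case False
  then have ab: "a < b" using assms(1) by simp
  obtain x where x: "x \<in> {a<..<b}" and le: "norm (\<phi> b - \<phi> a) \<le> norm ((b - a) *\<^sub>R d x)"
    using mvt_general[OF ab assms(2), of "\<lambda>x h. h *\<^sub>R d x"] assms(3) unfolding has_vector_derivative_def
    by blast
  have "norm ((b - a) *\<^sub>R d x) = (b - a) * norm (d x)" using ab by simp
  also have "\<dots> \<le> (b - a) * B" using assms(4)[of x] x ab by (intro mult_left_mono) auto
  finally show ?thesis using le by (simp add: mult.commute)
qed

lemma const_interval:
  fixes \<phi> :: "real \<Rightarrow> 'h::real_inner"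
  assumes "a \<le> b" "continuous_on {a..b} \<phi>"
    "\<And>x. a < x \<Longrightarrow> x < b \<Longrightarrow> (\<phi> has_vector_derivative 0) (at x)"
  shows "\<phi> b = \<phi> a"
  using mvb[OF assms(1,2), of "\<lambda>_. 0" 0] assms(3) by simp

lemma csg_unique_dom:
  fixes V W :: "real \<Rightarrow> 'h::real_inner \<Rightarrow> 'h"
  assumes V: "csg V" and W: "csg W" and DW: "Dom V \<subseteq> Dom W" and GW: "\<And>f. f \<in> Dom V \<Longrightarrow> gen W f = gen V f"
    and f: "f \<in> Dom V" and s: "s > 0"
  shows "W s f = V s f"
proof -
  define \<phi> where "\<phi> r = W (s - r) (V r f)" for r
  have cont: "continuous_on {0..s} \<phi>"
    unfolding continuous_on_def
  proof
    fix r assume r: "r \<in> {0..s}"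
    have ev: "eventually (\<lambda>y. y \<in> {0..s}) (at r within {0..s})"
      by (simp add: eventually_at_filter)
    show "(\<phi> \<longlongrightarrow> \<phi> r) (at r within {0..s})" unfolding \<phi>_def
    proof (rule csg_T[OF W])
      show "((\<lambda>y. V y f) \<longlongrightarrow> V r f) (at r within {0..s})"
        using csgD(5)[OF V, of f] r unfolding continuous_on_def
        by (meson atLeastAtMost_iff atLeast_iff subsetI tendsto_within_subset)
      show "((\<lambda>y. s - y) \<longlongrightarrow> s - r) (at r within {0..s})"
        by (intro tendsto_intros)
      show "\<forall>\<^sub>F y in at r within {0..s}. 0 \<le> s - y" using ev by eventually_elim auto
    qed (use r in auto)
  qed
  have der: "(\<phi> has_vector_derivative 0) (at r)" if r: "0 < r" "r < s" for r
    unfolding vd_iff filterlim_at_split[of _ _ r]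
  proof
    define x where "x = V r f"
    have x: "x \<in> Dom V" "gen V x = V r (gen V f)" using csg_L1[OF V f, of r] r unfolding x_def by auto
    have xW: "x \<in> Dom W" "gen W x = gen V x" using x DW GW by auto
    have "((\<lambda>y. W (s - y) (dq V x (y - r) - dq W x (y - r))) \<longlongrightarrow> W (s - r) (gen V x - gen W x)) (at_right r)"
    proof (rule csg_T[OF W])
      show "((\<lambda>y. dq V x (y - r) - dq W x (y - r)) \<longlongrightarrow> gen V x - gen W x) (at_right r)"
        by (intro tendsto_diff filterlim_compose[OF gen_tendsto fl_right] x xW)
      show "((\<lambda>y. s - y) \<longlongrightarrow> s - r) (at_right r)" by (intro tendsto_intros)
      show "\<forall>\<^sub>F y in at_right r. 0 \<le> s - y"
        using eventually_at_right_real[of r s] r by (auto elim: eventually_mono)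
    qed (use r in auto)
    moreover have "W (s - r) 0 = 0" using csgD(1)[OF W, of "s - r"] r by (simp add: linear_simps)
    ultimately have lim: "((\<lambda>y. W (s - y) (dq V x (y - r) - dq W x (y - r))) \<longlongrightarrow> 0) (at_right r)"
      using xW by simp
    have "eventually (\<lambda>y. W (s - y) (dq V x (y - r) - dq W x (y - r)) = (1 / (y - r)) *\<^sub>R (\<phi> y - \<phi> r)) (at_right r)"
      using eventually_at_right_real[of r s] r
    proof (auto elim!: eventually_mono)
      fix y assume y: "r < y" "y < s"
      have e1: "V y f = V (y - r) x" using csgD(4)[OF V, of "y - r" r] y r unfolding x_def by simp
      have e2: "W (s - r) z = W (s - y) (W (y - r) z)" for z using csgD(4)[OF W, of "s - y" "y - r"] y by simp
      have bl: "bounded_linear (W (s - y))" using csgD(1)[OF W] y by simp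
      show "W (s - y) (dq V x (y - r) - dq W x (y - r)) = (1 / (y - r)) *\<^sub>R (\<phi> y - \<phi> r)"
        unfolding \<phi>_def dq_def x_def[symmetric] e1 e2 using bl
        by (simp add: linear_simps scaleR_diff_right)
    qed
    from Lim_transform_eventually[OF lim this]
    show "((\<lambda>y. (1 / (y - r)) *\<^sub>R (\<phi> y - \<phi> r)) \<longlongrightarrow> 0) (at_right r)" .
  next
    define x where "x = V r f"
    have x: "x \<in> Dom V" "gen V x = V r (gen V f)" using csg_L1[OF V f, of r] r unfolding x_def by auto
    have xW: "x \<in> Dom W" "gen W x = gen V x" using x DW GW by auto
    define u where "u = V r (gen V f)"
    define Q1 where "Q1 y = (1 / (r - y)) *\<^sub>R (V r f - V y f)" for y
    define Q2 where "Q2 y = W (r - y) ((1 / (r - y)) *\<^sub>R (V y f - V r f)) - (1 / (r - y)) *\<^sub>R (V y f - V r f) + dq W x (r - y)" for y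
    have ev0: "eventually (\<lambda>y. y \<in> {0<..<r}) (at_left r)" using eventually_at_left_real[of 0 r] r by simp
    have L: "((\<lambda>y. (1 / (y - r)) *\<^sub>R (V y f - V r f)) \<longlongrightarrow> u) (at_left r)"
      using csg_L2[OF V f r(1)] unfolding vd_iff filterlim_at_split u_def by simp
    have Q1L: "(Q1 \<longlongrightarrow> u) (at_left r)"
    proof (rule Lim_transform_eventually[OF L])
      show "eventually (\<lambda>y. (1 / (y - r)) *\<^sub>R (V y f - V r f) = Q1 y) (at_left r)"
        using ev0 proof eventually_elim
        case (elim y)
        have e: "1 / (y - r) = - (1 / (r - y))" using elim by (simp add: field_simps)
        show ?case unfolding Q1_def e by (simp add: scaleR_diff_right)
      qed
    qed
    have L': "((\<lambda>y. (1 / (r - y)) *\<^sub>R (V y f - V r f)) \<longlongrightarrow> - u) (at_left r)"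
    proof (rule Lim_transform_eventually[OF tendsto_minus[OF Q1L]])
      show "eventually (\<lambda>y. - Q1 y = (1 / (r - y)) *\<^sub>R (V y f - V r f)) (at_left r)"
        unfolding Q1_def by (simp add: scaleR_diff_right)
    qed
    have Q2L: "(Q2 \<longlongrightarrow> - u - - u + gen W x) (at_left r)"
      unfolding Q2_def
    proof (intro tendsto_add tendsto_diff L' filterlim_compose[OF gen_tendsto fl_left] xW)
      show "((\<lambda>y. W (r - y) ((1 / (r - y)) *\<^sub>R (V y f - V r f))) \<longlongrightarrow> - u) (at_left r)"
      proof -
        have a: "((\<lambda>y. r - y) \<longlongrightarrow> 0) (at_left r)"
          by (rule tendsto_eq_intros refl)+ (auto intro: tendsto_ident_at)
        have b: "\<forall>\<^sub>F z in at_left r. 0 \<le> r - z" using ev0 by eventually_elim auto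
        show ?thesis using csg_T[OF W L' a b] csgD(3)[OF W] by simp
      qed
    qed
    have "((\<lambda>y. W (s - r) (Q1 y - Q2 y)) \<longlongrightarrow> W (s - r) (u - (- u - - u + gen W x))) (at_left r)"
      by (intro bounded_linear.tendsto[OF csgD(1)[OF W]] tendsto_diff Q1L Q2L) (use r in auto)
    moreover have "W (s - r) 0 = 0" using csgD(1)[OF W, of "s - r"] r by (simp add: linear_simps)
    ultimately have lim: "((\<lambda>y. W (s - r) (Q1 y - Q2 y)) \<longlongrightarrow> 0) (at_left r)"
      using xW x unfolding u_def by simp
    have "eventually (\<lambda>y. W (s - r) (Q1 y - Q2 y) = (1 / (y - r)) *\<^sub>R (\<phi> y - \<phi> r)) (at_left r)"
      using ev0
    proof eventually_elim
      case (elim y)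
      then have y: "0 < y" "y < r" by auto
      have e1: "V r f = V (r - y) (V y f)" using csgD(4)[OF V, of "r - y" y] y by simp
      have e2: "W (s - y) z = W (s - r) (W (r - y) z)" for z using csgD(4)[OF W, of "s - r" "r - y"] y r by simp
      have e: "1 / (y - r) = - (1 / (r - y))" using y by (simp add: field_simps)
      have bl: "bounded_linear (W (s - r))" "bounded_linear (W (r - y))" using csgD(1)[OF W] y r by auto
      have "Q1 y - Q2 y = (1 / (r - y)) *\<^sub>R (V (r - y) (V y f) - W (r - y) (V y f))"
        unfolding Q1_def Q2_def dq_def x_def e1[symmetric] using bl(2)
        by (simp add: linear_simps scaleR_diff_right algebra_simps)
      then show ?case unfolding \<phi>_def e e2 using bl(1)
        by (simp add: linear_simps scaleR_diff_right e1[symmetric])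
    qed
    from Lim_transform_eventually[OF lim this]
    show "((\<lambda>y. (1 / (y - r)) *\<^sub>R (\<phi> y - \<phi> r)) \<longlongrightarrow> 0) (at_left r)" .
  qed
  have "\<phi> s = \<phi> 0" by (rule const_interval) (use s cont der in auto)
  then show ?thesis unfolding \<phi>_def using csgD(3)[OF V] csgD(3)[OF W] by simp
qed

lemma csg_unique:
  fixes V W :: "real \<Rightarrow> 'h::real_inner \<Rightarrow> 'h"
  assumes V: "csg V" and W: "csg W" and DW: "Dom V \<subseteq> Dom W" and GW: "\<And>f. f \<in> Dom V \<Longrightarrow> gen W f = gen V f"
    and dense: "closure (Dom V) = UNIV" and s: "s \<ge> 0"
  shows "W s x = V s x"
proof (cases "s = 0")
  case True then show ?thesis using csgD(3)[OF V] csgD(3)[OF W] by simp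
next
  case False
  then have s: "s > 0" using s by simp
  have "closed {x. W s x = V s x}"
    by (intro closed_Collect_eq linear_continuous_on csgD(1) V W) (use s in auto)
  moreover have "Dom V \<subseteq> {x. W s x = V s x}" using csg_unique_dom[OF V W DW GW _ s] by auto
  ultimately have "closure (Dom V) \<subseteq> {x. W s x = V s x}" by (rule closure_minimal[rotated])
  then show ?thesis using dense by auto
qed

lemma cs_facts:
  assumes "cplx_structure J"
  shows "bounded_linear J" "\<And>x. J (J x) = - x" "\<And>x. norm (J x) = norm x" "linear J"
proof -
  have l: "linear J" and JJ: "\<And>x. J (J x) = - x" and ip: "\<And>x y. inner (J x) (J y) = inner x y"
    using assms unfolding cplx_structure_def by auto
  have n: "norm (J x) = norm x" for x by (simp add: norm_eq_sqrt_inner ip)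
  show "bounded_linear J"
    by (rule bounded_linear_intro[where K=1]) (use l n in \<open>auto simp: linear_add linear_scale\<close>)
  show "\<And>x. J (J x) = - x" "\<And>x. norm (J x) = norm x" "linear J" using JJ n l by auto
qed

lemma smC_simps:
  "smC J \<i> y = J y" "smC J 1 y = y" "smC J (complex_of_real c) y = c *\<^sub>R y"
  by (simp_all add: smC_def)

lemma smC_mult:
  assumes "cplx_structure J" shows "smC J z (smC J w x) = smC J (z * w) x"
proof -
  have l: "linear J" and JJ: "J (J x) = - x" using cs_facts[OF assms] by auto
  show ?thesis unfolding smC_def using l JJ
    by (simp add: linear_add linear_scale algebra_simps)
qed

lemma J_smC:
  assumes "cplx_structure J" shows "J (smC J c x) = smC J c (J x)"
proof -
  have l: "linear J" and JJ: "J (J x) = - x" using cs_facts[OF assms] by auto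
  show ?thesis unfolding smC_def using l JJ
    by (simp add: linear_add linear_scale algebra_simps)
qed

lemma smC_bl:
  assumes "cplx_structure J" shows "bounded_linear (smC J c)"
  unfolding smC_def
  by (intro bounded_linear_add bounded_linear_scaleR_right bounded_linear_compose[OF bounded_linear_scaleR_right]
      cs_facts(1)[OF assms] bounded_linear_ident)

lemma smC_exp:
  "smC J (exp (- (\<i> * complex_of_real \<theta>))) y = cos \<theta> *\<^sub>R y - sin \<theta> *\<^sub>R J y"
  by (simp add: smC_def Re_exp Im_exp)

lemma unitary_facts:
  assumes "unitary J U"
  shows "bounded_linear U" "\<And>x. norm (U x) = norm x" "\<And>x. U (J x) = J (U x)"
proof -
  have add: "U (x + y) = U x + U y" for x y using assms unfolding unitary_def by auto
  have sm: "U (smC J c x) = smC J c (U x)" for c x using assms unfolding unitary_def by auto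
  have "cinner J (U x) (U y) = cinner J x y" for x y using assms unfolding unitary_def by auto
  then have ip: "inner (U x) (U y) = inner x y" for x y
    by (metis cinner_def complex.sel(1))
  have n: "norm (U x) = norm x" for x by (simp add: norm_eq_sqrt_inner ip)
  show "bounded_linear U"
    by (rule bounded_linear_intro[where K=1]) (use add n sm[of "complex_of_real _"] in \<open>auto simp: smC_simps\<close>)
  show "\<And>x. norm (U x) = norm x" by (rule n)
  show "\<And>x. U (J x) = J (U x)" using sm[of \<i>] by (simp add: smC_simps)
qed

lemma rep_facts:
  assumes "sc_unitary_rep J g U"
  shows "U 0 = id" "\<And>x. U (- t) (U t x) = x" "\<And>x. U t (U (- t) x) = x" "inv (U t) = U (- t)"
proof -
  have un: "unitary J (U t)" for t using assms unfolding sc_unitary_rep_def by blast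
  have comp: "U (t + s) = U t \<circ> U s" for t s using assms unfolding sc_unitary_rep_def by blast
  have "surj (U 0)" using un unfolding unitary_def by blast
  have "U 0 y = y" for y
  proof -
    obtain z where "y = U 0 z" using \<open>surj (U 0)\<close> by (metis surjD)
    moreover have "U 0 (U 0 z) = U 0 z" using fun_cong[OF comp[of 0 0], of z] unfolding add_0 o_apply by (rule sym)
    ultimately show ?thesis by simp
  qed
  then show U0: "U 0 = id" by auto
  show i1: "\<And>x. U (- t) (U t x) = x" using comp[of "-t" t] U0 by (simp add: fun_eq_iff)
  show i2: "\<And>x. U t (U (- t) x) = x" using comp[of t "-t"] U0 by (simp add: fun_eq_iff)
  show "inv (U t) = U (- t)"
    by (rule inv_equality) (use i1 i2 in auto)
qed

lemma lim_quot_trig: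
  fixes c :: real
  shows "((\<lambda>r. (cos (r * c) - 1) / r) \<longlongrightarrow> 0) (at_right 0)"
    "((\<lambda>r. sin (r * c) / r) \<longlongrightarrow> c) (at_right 0)"
proof -
  have "((\<lambda>r. cos (r * c)) has_field_derivative - sin (0 * c) * c) (at 0)"
    by (auto intro!: derivative_eq_intros)
  then have "((\<lambda>r. (cos (r * c) - cos (0 * c)) / (r - 0)) \<longlongrightarrow> - sin (0 * c) * c) (at 0)"
    unfolding has_field_derivative_iff .
  from tendsto_within_subset[OF this subset_UNIV, of "{0<..}"]
  show "((\<lambda>r. (cos (r * c) - 1) / r) \<longlongrightarrow> 0) (at_right 0)"
    by simp
  have "((\<lambda>r. sin (r * c)) has_field_derivative cos (0 * c) * c) (at 0)"
    by (auto intro!: derivative_eq_intros)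
  then have "((\<lambda>r. (sin (r * c) - sin (0 * c)) / (r - 0)) \<longlongrightarrow> cos (0 * c) * c) (at 0)"
    unfolding has_field_derivative_iff .
  from tendsto_within_subset[OF this subset_UNIV, of "{0<..}"]
  show "((\<lambda>r. sin (r * c) / r) \<longlongrightarrow> c) (at_right 0)"
    by simp
qed

lemma fl_scale: "(a::real) > 0 \<Longrightarrow> filterlim (\<lambda>r. r / a) (at_right 0) (at_right 0)"
proof -
  assume a: "a > 0"
  have "((\<lambda>r. r / a) \<longlongrightarrow> 0 / a) (at_right 0)"
    by (intro tendsto_divide tendsto_ident_at tendsto_const) (use a in auto)
  then have "((\<lambda>r. r / a) \<longlongrightarrow> 0) (at_right 0)" by simp
  moreover have "eventually (\<lambda>r. r / a \<in> {0<..} \<and> r / a \<noteq> 0) (at_right (0::real))"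
    using ev_pos by eventually_elim (use a in auto)
  ultimately show ?thesis by (simp add: filterlim_at)
qed

lemma alg: fixes A B C D :: "'a::real_vector" assumes "r \<noteq> 0"
  shows "c *\<^sub>R A - s *\<^sub>R C + ((c - 1) / r) *\<^sub>R B - (s / r) *\<^sub>R D = (1 / r) *\<^sub>R (c *\<^sub>R (r *\<^sub>R A + B) - s *\<^sub>R (r *\<^sub>R C + D) - B)"
proof -
  have e1: "inverse r * (c * r) = c" "inverse r * (s * r) = s" using assms by auto
  show ?thesis
  using assms by (simp add: scaleR_add_right scaleR_diff_right scaleR_diff_left diff_divide_distrib divide_inverse e1 algebra_simps)
qed

lemma SH:
  assumes cs: "cplx_structure J" and V: "csg V" and Ub: "bounded_linear Ut" and UJ: "\<And>z. Ut (J z) = J (Ut z)"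
    and a: "a > 0" and x: "x \<in> Dom V"
  shows "((\<lambda>r. (1 / r) *\<^sub>R (smC J (exp (- (\<i> * complex_of_real (r / a * b)))) (Ut (V (r / a) x)) - Ut x))
     \<longlongrightarrow> (1 / a) *\<^sub>R Ut (gen V x) - (b / a) *\<^sub>R J (Ut x)) (at_right 0)"
proof -
  have Jb: "bounded_linear J" using cs_facts[OF cs] by auto
  define q where "q r = Ut ((1 / a) *\<^sub>R dq V x (r / a))" for r
  have ql: "(q \<longlongrightarrow> Ut ((1 / a) *\<^sub>R gen V x)) (at_right 0)"
    unfolding q_def
    by (intro bounded_linear.tendsto[OF Ub] tendsto_scaleR tendsto_const filterlim_compose[OF gen_tendsto[OF x] fl_scale[OF a]])
  have "((\<lambda>r::real. r / a * b) \<longlongrightarrow> 0 / a * b) (at_right 0)"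
    by (intro tendsto_mult tendsto_divide tendsto_ident_at tendsto_const) (use a in auto)
  then have th: "((\<lambda>r::real. r / a * b) \<longlongrightarrow> 0) (at_right 0)" by simp
  have t1: "((\<lambda>r. cos (r / a * b)) \<longlongrightarrow> 1) (at_right 0)" "((\<lambda>r. sin (r / a * b)) \<longlongrightarrow> 0) (at_right 0)"
    using tendsto_cos[OF th] tendsto_sin[OF th] by simp_all
  have t2: "((\<lambda>r. (cos (r / a * b) - 1) / r) \<longlongrightarrow> 0) (at_right 0)" "((\<lambda>r. sin (r / a * b) / r) \<longlongrightarrow> b / a) (at_right 0)"
    using lim_quot_trig[of "b / a"] by (simp_all add: mult.commute)
  have "((\<lambda>r. cos (r / a * b) *\<^sub>R q r - sin (r / a * b) *\<^sub>R J (q r) + ((cos (r / a * b) - 1) / r) *\<^sub>R Ut x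
      - (sin (r / a * b) / r) *\<^sub>R J (Ut x)) \<longlongrightarrow>
      1 *\<^sub>R Ut ((1 / a) *\<^sub>R gen V x) - 0 *\<^sub>R J (Ut ((1 / a) *\<^sub>R gen V x)) + 0 *\<^sub>R Ut x - (b / a) *\<^sub>R J (Ut x)) (at_right 0)"
    by (intro tendsto_diff tendsto_add tendsto_scaleR t1 t2 ql bounded_linear.tendsto[OF Jb] tendsto_const)
  then have lim: "((\<lambda>r. cos (r / a * b) *\<^sub>R q r - sin (r / a * b) *\<^sub>R J (q r) + ((cos (r / a * b) - 1) / r) *\<^sub>R Ut x
      - (sin (r / a * b) / r) *\<^sub>R J (Ut x)) \<longlongrightarrow> (1 / a) *\<^sub>R Ut (gen V x) - (b / a) *\<^sub>R J (Ut x)) (at_right 0)"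
    using Ub by (simp add: linear_simps)
  show ?thesis
  proof (rule Lim_transform_eventually[OF lim])
    show "eventually (\<lambda>r. cos (r / a * b) *\<^sub>R q r - sin (r / a * b) *\<^sub>R J (q r) + ((cos (r / a * b) - 1) / r) *\<^sub>R Ut x
      - (sin (r / a * b) / r) *\<^sub>R J (Ut x) = (1 / r) *\<^sub>R (smC J (exp (- (\<i> * complex_of_real (r / a * b)))) (Ut (V (r / a) x)) - Ut x)) (at_right 0)"
      using ev_pos
    proof eventually_elim
      case (elim r)
      have e: "(1 / a) *\<^sub>R dq V x (r / a) = (1 / r) *\<^sub>R (V (r / a) x - x)"
        unfolding dq_def using a elim by simp
      have Y: "V (r / a) x = r *\<^sub>R ((1 / r) *\<^sub>R (V (r / a) x - x)) + x" using elim by simp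
      have Y1: "Ut (V (r / a) x) = r *\<^sub>R q r + Ut x" unfolding q_def e
        by (subst Y) (simp add: linear_simps Ub)
      have Y2: "J (Ut (V (r / a) x)) = r *\<^sub>R J (q r) + J (Ut x)" unfolding Y1
        by (simp add: linear_simps Jb)
      show ?case unfolding smC_exp Y2 unfolding Y1
        by (rule alg) (use elim in auto)
    qed
  qed
qed



lemma dq_lin:
  assumes V: "csg V" and s: "s > 0"
  shows "dq V (x + y) s = dq V x s + dq V y s" "dq V (c *\<^sub>R x) s = c *\<^sub>R dq V x s" "dq V 0 s = 0"
  using csgD(1)[OF V, of s] s unfolding dq_def
  by (simp_all add: linear_simps scaleR_add_right scaleR_diff_right algebra_simps)

lemma dom_scale:
  assumes V: "csg V" and x: "x \<in> Dom V" shows "c *\<^sub>R x \<in> Dom V"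
proof -
  have "((\<lambda>s. c *\<^sub>R dq V x s) \<longlongrightarrow> c *\<^sub>R gen V x) (at_right 0)"
    by (intro tendsto_scaleR tendsto_const gen_tendsto x)
  moreover have "eventually (\<lambda>s. c *\<^sub>R dq V x s = dq V (c *\<^sub>R x) s) (at_right 0)"
    using ev_pos by eventually_elim (simp add: dq_lin[OF V])
  ultimately show ?thesis using gen_eq Lim_transform_eventually by blast
qed

lemma ev01: "eventually (\<lambda>x. x \<in> {0<..<1}) (at_right (0::real))"
  by (rule eventually_at_right_real) simp

lemma dense_dom:
  fixes V :: "real \<Rightarrow> 'h::{real_inner,complete_space} \<Rightarrow> 'h"
  assumes V: "csg V"
  shows "closure (Dom V) = UNIV"
proof -
  have "f \<in> closure (Dom V)" for f
  proof -
    have cf: "continuous_on {0..2} (\<lambda>r. V r f)"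
      by (rule continuous_on_subset[OF csgD(5)[OF V]]) auto
    obtain G where G0: "G 0 = 0" and GD: "\<And>x. x \<in> {0..2} \<Longrightarrow> (G has_vector_derivative V x f) (at x within {0..2})"
      using antideriv[OF cf] by blast
    have Gc: "continuous_on {0..2} G"
      using GD has_vector_derivative_continuous continuous_on_eq_continuous_within by blast
    have GDi: "(G has_vector_derivative V x f) (at x)" if "0 < x" "x < 2" for x
      using GD[of x] that at_within_Icc_at[of 0 x 2] by auto
    have shift: "V s (G h) = G (s + h) - G s" if s: "0 \<le> s" "s \<le> 1" and h: "0 \<le> h" "h \<le> 1" for s h
    proof -
      define \<Phi> where "\<Phi> u = V s (G u) - G (s + u) + G s" for u
      have bl: "bounded_linear (V s)" using csgD(1)[OF V] s by auto
      have c1: "continuous_on {0..1} (\<lambda>u. V s (G u))"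
        by (rule continuous_on_compose2[OF linear_continuous_on[OF bl] continuous_on_subset[OF Gc]]) auto
      have c2: "continuous_on {0..1} (\<lambda>u. G (s + u))"
        by (rule continuous_on_compose2[OF Gc]) (use s in \<open>auto intro!: continuous_intros\<close>)
      have cont: "continuous_on {0..1} \<Phi>" unfolding \<Phi>_def
        by (intro continuous_on_add continuous_on_diff c1 c2 continuous_on_const)
      have der: "(\<Phi> has_vector_derivative 0) (at u)" if u: "0 < u" "u < 1" for u
      proof -
        have d1: "((\<lambda>u. V s (G u)) has_vector_derivative V s (V u f)) (at u)"
          by (rule bounded_linear.has_vector_derivative[OF bl GDi]) (use u in auto)
        have "((\<lambda>u. s + u) has_vector_derivative 1) (at u)"
          by (auto intro!: derivative_eq_intros)
        from vector_diff_chain_at[OF this GDi[of "s + u"]]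
        have d2: "((\<lambda>u. G (s + u)) has_vector_derivative V (s + u) f) (at u)" using u s by (simp add: o_def)
        have "(\<Phi> has_vector_derivative V s (V u f) - V (s + u) f + 0) (at u)"
          unfolding \<Phi>_def by (intro derivative_intros d1 d2)
        moreover have "V s (V u f) = V (s + u) f" using csgD(4)[OF V, of s u] s u by simp
        ultimately show ?thesis by simp
      qed
      have "\<Phi> h = \<Phi> 0" by (rule const_interval) (use h cont der in \<open>auto intro: continuous_on_subset\<close>)
      then show ?thesis unfolding \<Phi>_def using G0 bl by (simp add: linear_simps) (simp add: algebra_simps eq_neg_iff_add_eq_0)
    qed
    have at0: "((\<lambda>y. (1 / (y - 0)) *\<^sub>R (G y - G 0)) \<longlongrightarrow> V 0 f) (at_right 0)"
      using GD[of 0] unfolding vd_iff by (simp add: at_within_Icc_at_right)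
    then have at0': "((\<lambda>y. (1 / y) *\<^sub>R G y) \<longlongrightarrow> f) (at_right 0)"
      using csgD(3)[OF V] G0 by simp
    have inD: "G h \<in> Dom V" if h: "0 < h" "h \<le> 1" for h
    proof -
      have "((\<lambda>y. (1 / (y - h)) *\<^sub>R (G y - G h)) \<longlongrightarrow> V h f) (at h)"
        using GDi[of h] h unfolding vd_iff by simp
      then have "((\<lambda>y. (1 / (y - h)) *\<^sub>R (G y - G h)) \<longlongrightarrow> V h f) (at_right h)"
        by (rule tendsto_within_subset) auto
      then have l1: "((\<lambda>s. (1 / (s + h - h)) *\<^sub>R (G (s + h) - G h)) \<longlongrightarrow> V h f) (at_right 0)"
        by (subst (asm) filterlim_at_right_to_0) simp
      have "((\<lambda>s. (1 / (s + h - h)) *\<^sub>R (G (s + h) - G h) - (1 / s) *\<^sub>R G s) \<longlongrightarrow> V h f - f) (at_right 0)"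
        by (intro tendsto_diff l1 at0')
      moreover have "eventually (\<lambda>s. (1 / (s + h - h)) *\<^sub>R (G (s + h) - G h) - (1 / s) *\<^sub>R G s = dq V (G h) s) (at_right 0)"
        using ev01
      proof eventually_elim
        case (elim s)
        then show ?case unfolding dq_def using shift[of s h] h
          by (simp add: scaleR_diff_right add.commute)
      qed
      ultimately show ?thesis using gen_eq Lim_transform_eventually by blast
    qed
    show ?thesis
    proof (rule Lim_in_closed_set[OF closed_closure _ _ at0'])
      show "eventually (\<lambda>y. (1 / y) *\<^sub>R G y \<in> closure (Dom V)) (at_right 0)"
        using ev01
        by eventually_elim (auto intro!: closure_subset[THEN subsetD] dom_scale[OF V] inD)
    qed simp
  qed
  then show ?thesis by auto
qed

lemma closed_gen:
  fixes V :: "real \<Rightarrow> 'h::real_inner \<Rightarrow> 'h"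
  assumes V: "csg V" and xD: "\<And>n. xn n \<in> Dom V" and xl: "xn \<longlonglongrightarrow> x0"
    and gl: "(\<lambda>n. gen V (xn n)) \<longlonglongrightarrow> w"
  shows "x0 \<in> Dom V \<and> gen V x0 = w"
proof (rule gen_eq)
  show "(dq V x0 \<longlongrightarrow> w) (at_right 0)"
    unfolding tendsto_iff
  proof (intro allI impI)
    fix e :: real assume e: "e > 0"
    define \<epsilon> where "\<epsilon> = e / 2"
    have \<epsilon>: "\<epsilon> > 0" "\<epsilon> < e" using e unfolding \<epsilon>_def by auto
    obtain \<delta> where \<delta>: "\<delta> > 0" and \<delta>c: "\<And>r. r \<in> {0..} \<Longrightarrow> dist r 0 < \<delta> \<Longrightarrow> dist (V r w) (V 0 w) < \<epsilon>"
      using csgD(5)[OF V, of w] \<epsilon> unfolding continuous_on_iff by (meson atLeast_iff order_refl)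
    have key: "norm (dq V x0 s - w) \<le> \<epsilon>" if s: "0 < s" "s < \<delta>" for s
    proof -
      have bnd: "norm (V s (xn n) - s *\<^sub>R w - xn n) \<le> (norm (gen V (xn n) - w) + \<epsilon>) * s" for n
      proof -
        define \<phi> where "\<phi> r = V r (xn n) - r *\<^sub>R w" for r
        have cont: "continuous_on {0..s} \<phi>" unfolding \<phi>_def
          by (intro continuous_on_diff continuous_on_subset[OF csgD(5)[OF V]] continuous_intros) auto
        have "norm (\<phi> s - \<phi> 0) \<le> (norm (gen V (xn n) - w) + \<epsilon>) * (s - 0)"
        proof (rule mvb[OF _ cont])
          fix r assume r: "0 < r" "r < s"
          show "(\<phi> has_vector_derivative V r (gen V (xn n)) - w) (at r)"
            unfolding \<phi>_def
            by (intro derivative_intros csg_L2[OF V xD] r) (auto intro!: derivative_eq_intros)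
          have bl: "bounded_linear (V r)" using csgD(1)[OF V] r by auto
          have "V r (gen V (xn n)) - w = V r (gen V (xn n) - w) + (V r w - V 0 w)"
            using bl csgD(3)[OF V] by (simp add: linear_simps)
          also have "norm \<dots> \<le> norm (V r (gen V (xn n) - w)) + norm (V r w - V 0 w)"
            by (rule norm_triangle_ineq)
          also have "\<dots> \<le> norm (gen V (xn n) - w) + \<epsilon>"
            using csgD(2)[OF V, of r] \<delta>c[of r] r s by (intro add_mono) (auto simp: dist_norm)
          finally show "norm (V r (gen V (xn n)) - w) \<le> norm (gen V (xn n) - w) + \<epsilon>" .
        qed (use s in auto)
        then show ?thesis unfolding \<phi>_def using csgD(3)[OF V] by (simp add: algebra_simps)
      qed
      have bls: "bounded_linear (V s)" using csgD(1)[OF V] s by auto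
      have l1: "(\<lambda>n. norm (V s (xn n) - s *\<^sub>R w - xn n)) \<longlonglongrightarrow> norm (V s x0 - s *\<^sub>R w - x0)"
        by (intro tendsto_intros bounded_linear.tendsto[OF bls] xl)
      have l2: "(\<lambda>n. (norm (gen V (xn n) - w) + \<epsilon>) * s) \<longlonglongrightarrow> (norm (w - w) + \<epsilon>) * s"
        by (intro tendsto_intros gl)
      have le: "norm (V s x0 - s *\<^sub>R w - x0) \<le> \<epsilon> * s"
        using tendsto_le[OF _ l2 l1] bnd by simp
      have "dq V x0 s - w = (1 / s) *\<^sub>R (V s x0 - s *\<^sub>R w - x0)"
        unfolding dq_def using s by (simp add: algebra_simps scaleR_diff_right)
      then have "norm (dq V x0 s - w) = norm (V s x0 - s *\<^sub>R w - x0) / s" using s by simp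
      also have "\<dots> \<le> \<epsilon>" using le s by (simp add: divide_simps mult.commute)
      finally show ?thesis .
    qed
    show "eventually (\<lambda>s. dist (dq V x0 s) w < e) (at_right 0)"
      using eventually_at_right_real[OF \<delta>]
      by eventually_elim (use key \<epsilon> in \<open>force simp: dist_norm\<close>)
  qed
qed



lemma gb_facts:
  assumes cs: "cplx_structure J" and gb: "generated_by J V D A"
  shows "D = Dom V" "\<And>f. f \<in> D \<Longrightarrow> gen V f = J (A f)" "\<And>f. f \<in> D \<Longrightarrow> A f = - J (gen V f)"
proof -
  have e: "dq V f = (\<lambda>s. (1 / s) *\<^sub>R (V s f - f))" for f by (rule ext) (simp add: dq_def)
  show D: "D = Dom V" using gb unfolding generated_by_def Dom_def e by simp
  show g: "gen V f = J (A f)" if "f \<in> D" for f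
    using gb that gen_eq[of V f] unfolding generated_by_def e by (simp add: smC_simps)
  show "A f = - J (gen V f)" if "f \<in> D" for f
    using g[OF that] cs_facts(2)[OF cs] by simp
qed

lemma norm_smC_exp:
  assumes cs: "cplx_structure J"
  shows "norm (smC J (exp (- (\<i> * complex_of_real \<theta>))) y) = norm y"
proof -
  have ip: "inner (J x) (J z) = inner x z" for x z using cs unfolding cplx_structure_def by auto
  have JJ: "J (J x) = - x" for x using cs_facts(2)[OF cs] .
  have "inner y (J y) = inner (J y) (J (J y))" using ip by simp
  also have "\<dots> = - inner y (J y)" by (simp add: JJ inner_commute)
  finally have o: "inner y (J y) = 0" by simp
  have nJ: "inner (J y) (J y) = inner y y" using ip by simp
  have c1: "Y * (cos \<theta> * cos \<theta>) + Y * (sin \<theta> * sin \<theta>) = Y" for Y :: real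
  proof -
    have "Y * (cos \<theta> * cos \<theta>) + Y * (sin \<theta> * sin \<theta>) = Y * (cos \<theta> * cos \<theta> + sin \<theta> * sin \<theta>)"
      by (simp only: distrib_left)
    also have "\<dots> = Y * 1" using sin_cos_squared_add2[of \<theta>] unfolding power2_eq_square by (simp only:)
    also have "\<dots> = Y" by simp
    finally show ?thesis .
  qed
  have c2: "cos \<theta> * (cos \<theta> * Y) + sin \<theta> * (sin \<theta> * Y) = Y" for Y :: real
  proof -
    have "cos \<theta> * (cos \<theta> * Y) + sin \<theta> * (sin \<theta> * Y) = (cos \<theta> * cos \<theta> + sin \<theta> * sin \<theta>) * Y"
      by (simp only: mult.assoc[symmetric] distrib_right[symmetric])
    also have "\<dots> = 1 * Y" using sin_cos_squared_add2[of \<theta>] unfolding power2_eq_square by (simp only:)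
    also have "\<dots> = Y" by simp
    finally show ?thesis .
  qed
  have "inner (cos \<theta> *\<^sub>R y - sin \<theta> *\<^sub>R J y) (cos \<theta> *\<^sub>R y - sin \<theta> *\<^sub>R J y) = inner y y"
    by (simp add: inner_diff_left inner_diff_right o nJ inner_commute[of "J y" y] power2_eq_square algebra_simps c1 c2)
  then show ?thesis unfolding smC_exp norm_eq_sqrt_inner by simp
qed

lemma cs_smC_V:
  assumes "contraction_semigroup J V" "s \<ge> 0"
  shows "V s (smC J c x) = smC J c (V s x)"
  using assms unfolding contraction_semigroup_def by blast

lemma W_csg:
  assumes cs: "cplx_structure J" and V: "contraction_semigroup J V" and Ut: "unitary J Ut" and Ui: "unitary J Ui"
    and inv1: "\<And>x. Ut (Ui x) = x" and inv2: "\<And>x. Ui (Ut x) = x" and a: "a > 0"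
  shows "csg (\<lambda>r y. smC J (exp (- (\<i> * complex_of_real (r / a * b)))) (Ut (V (r / a) (Ui y))))"
proof -
  define E where "E r = exp (- (\<i> * complex_of_real (r / a * b)))" for r
  define W where "W r y = smC J (E r) (Ut (V (r / a) (Ui y)))" for r y
  have V': "csg V" by (rule csg_from[OF V])
  have bUt: "bounded_linear Ut" and bUi: "bounded_linear Ui" using unitary_facts Ut Ui by auto
  have smU: "Ut (smC J c x) = smC J c (Ut x)" "Ui (smC J c x) = smC J c (Ui x)" for c x
    using Ut Ui unfolding unitary_def by auto
  have nU: "norm (Ut x) = norm x" "norm (Ui x) = norm x" for x using unitary_facts(2)[OF Ut] unitary_facts(2)[OF Ui] by auto
  have bl: "bounded_linear (W r)" if "r \<ge> 0" for r
    unfolding W_def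
    by (intro bounded_linear_compose[OF smC_bl[OF cs]] bounded_linear_compose[OF bUt]
        bounded_linear_compose[OF csgD(1)[OF V'] bUi]) (use that a in auto)
  have nm: "norm (W r y) \<le> norm y" if "r \<ge> 0" for r y
  proof -
    have "norm (W r y) = norm (Ut (V (r / a) (Ui y)))" unfolding W_def E_def by (rule norm_smC_exp[OF cs])
    then show ?thesis using csgD(2)[OF V', of "r / a" "Ui y"] that a by (simp add: nU)
  qed
  have W0: "W 0 = id" using csgD(3)[OF V'] by (auto simp: W_def E_def smC_simps inv1)
  have sg: "W (s + r) = W s \<circ> W r" if "s \<ge> 0" "r \<ge> 0" for s r
  proof
    fix y
    have e: "E s * E r = E (s + r)"
    proof -
      have "- (\<i> * complex_of_real (s / a * b)) + - (\<i> * complex_of_real (r / a * b)) = - (\<i> * complex_of_real ((s + r) / a * b))"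
        by (simp add: algebra_simps add_divide_distrib)
      then show ?thesis unfolding E_def by (metis exp_add)
    qed
    have VV: "V ((s + r) / a) (Ui y) = V (s / a) (V (r / a) (Ui y))"
      using csgD(4)[OF V', of "s / a" "r / a"] that a by (simp add: add_divide_distrib)
    have "(W s \<circ> W r) y = smC J (E s) (smC J (E r) (Ut (V (s / a) (V (r / a) (Ui y)))))"
      unfolding W_def using cs_smC_V[OF V, of "s / a"] that a by (simp add: smU inv2)
    also have "\<dots> = W (s + r) y" unfolding W_def VV by (simp add: smC_mult[OF cs] e)
    finally show "W (s + r) y = (W s \<circ> W r) y" by simp
  qed
  have ct: "continuous_on {0..} (\<lambda>r. W r y)" for y
  proof -
    have cz: "continuous_on {0..} (\<lambda>r. Ut (V (r / a) (Ui y)))"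
      by (rule continuous_on_compose2[OF linear_continuous_on[OF bUt] continuous_on_compose2[OF csgD(5)[OF V']]])
         (use a in \<open>auto intro!: continuous_intros\<close>)
    have cJ: "continuous_on {0..} (\<lambda>r. J (Ut (V (r / a) (Ui y))))"
      by (rule continuous_on_compose2[OF linear_continuous_on[OF cs_facts(1)[OF cs]] cz]) auto
    show ?thesis unfolding W_def E_def smC_exp
      using a by (auto intro!: continuous_intros cz cJ)
  qed
  have "csg W" unfolding csg_def using bl nm W0 sg ct by blast
  then show ?thesis unfolding W_def[abs_def] E_def .
qed

lemma deriv_aff: "deriv (aff p) 0 = fst p"
proof -
  have "aff p = (\<lambda>x. fst p * x + snd p)" by (rule ext) (simp add: aff_def)
  moreover have "((\<lambda>x. fst p * x + snd p) has_field_derivative fst p) (at 0)"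
    by (auto intro!: derivative_eq_intros)
  ultimately show ?thesis by (simp add: DERIV_imp_deriv)
qed

lemma aff0: "aff p 0 = snd p" by (simp add: aff_def)

lemma part1:
  fixes J :: "'h::{real_inner, complete_space} \<Rightarrow> 'h"
  assumes cs: "cplx_structure J" and rep: "sc_unitary_rep J g U" and opa: "one_param_affine g"
    and Gi: "G_invariant J g U D A" and V: "contraction_semigroup J V" and gb: "generated_by J V D A"
    and s: "s \<ge> 0"
  shows "U t (V s x) = smC J (exp (\<i> * complex_of_real (s * aff (g t) 0))) (V (deriv (aff (g t)) 0 * s) (U t x))"
proof -
  define a where "a = fst (g t)"
  define b where "b = snd (g t)"
  have a: "a > 0" using opa unfolding one_param_affine_def a_def by auto
  have un: "unitary J (U r)" for r using rep unfolding sc_unitary_rep_def by blast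
  have i1: "U (- t) (U t x) = x" and i2: "U t (U (- t) x) = x" for x using rep_facts[OF rep] by auto
  define W where "W r y = smC J (exp (- (\<i> * complex_of_real (r / a * b)))) (U t (V (r / a) (U (- t) y)))" for r y
  have V': "csg V" by (rule csg_from[OF V])
  have W: "csg W" unfolding W_def[abs_def] by (rule W_csg[OF cs V un un i2 i1 a])
  have D: "D = Dom V" and gD: "\<And>f. f \<in> D \<Longrightarrow> gen V f = J (A f)" using gb_facts[OF cs gb] by auto
  have GI: "U r ` D = D" "\<And>f. f \<in> D \<Longrightarrow> U r (A (inv (U r) f)) = fst (g r) *\<^sub>R A f + snd (g r) *\<^sub>R f" for r
    using Gi unfolding G_invariant_def by auto
  have dense: "closure (Dom V) = UNIV" using Gi D unfolding G_invariant_def densely_defined_def by auto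
  have bUt: "bounded_linear (U t)" and UJ: "\<And>z. U t (J z) = J (U t z)" using unitary_facts[OF un] by auto
  have Jl: "linear J" using cs_facts[OF cs] by auto
  have dom: "f \<in> Dom W \<and> gen W f = gen V f" if f: "f \<in> Dom V" for f
  proof -
    define x where "x = U (- t) f"
    have xD: "x \<in> D" using GI(1)[of "- t"] f D unfolding x_def by auto
    have f': "f = U t x" unfolding x_def i2 ..
    have lim: "((\<lambda>r. (1 / r) *\<^sub>R (smC J (exp (- (\<i> * complex_of_real (r / a * b)))) (U t (V (r / a) x)) - U t x))
       \<longlongrightarrow> (1 / a) *\<^sub>R U t (gen V x) - (b / a) *\<^sub>R J (U t x)) (at_right 0)"
      by (rule SH[OF cs V' bUt UJ a]) (use xD D in auto)
    have "dq W f = (\<lambda>r. (1 / r) *\<^sub>R (smC J (exp (- (\<i> * complex_of_real (r / a * b)))) (U t (V (r / a) x)) - U t x))"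
      by (rule ext) (simp add: dq_def W_def x_def[symmetric] f'[symmetric])
    with lim have gw: "f \<in> Dom W \<and> gen W f = (1 / a) *\<^sub>R U t (gen V x) - (b / a) *\<^sub>R J (U t x)"
      using gen_eq by metis
    have "U t (A x) = a *\<^sub>R A f + b *\<^sub>R f"
      using GI(2)[of f t] f D rep_facts(4)[OF rep, of t] unfolding a_def b_def x_def by auto
    then have "(1 / a) *\<^sub>R U t (gen V x) - (b / a) *\<^sub>R J (U t x) = J (A f)"
      using gD[OF xD] UJ a Jl f'[symmetric] by (simp add: linear_add linear_scale scaleR_add_right)
    then show ?thesis using gw gD f D by simp
  qed
  have WV: "W r y = V r y" if "r \<ge> 0" for r y
    by (rule csg_unique[OF V' W _ _ dense that]) (use dom in auto)
  have "V (a * s) (U t x) = smC J (exp (- (\<i> * complex_of_real (s * b)))) (U t (V s x))"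
    using WV[of "a * s" "U t x"] a s unfolding W_def by (simp add: i1)
  moreover have "exp (\<i> * complex_of_real (s * b)) * exp (- (\<i> * complex_of_real (s * b))) = 1"
    by (rule exp_minus_inverse)
  ultimately show ?thesis unfolding deriv_aff aff0 a_def[symmetric] b_def[symmetric]
    by (simp add: smC_mult[OF cs] smC_simps)
qed



lemma solve_lin:
  fixes P Q R :: "'a::real_vector"
  assumes a: "a \<noteq> 0" and e: "P = (1 / a) *\<^sub>R Q - (b / a) *\<^sub>R R"
  shows "Q = a *\<^sub>R P + b *\<^sub>R R"
proof -
  have "a *\<^sub>R P = a *\<^sub>R ((1 / a) *\<^sub>R Q) - a *\<^sub>R ((b / a) *\<^sub>R R)" using e by (simp add: scaleR_diff_right)
  also have "\<dots> = Q - b *\<^sub>R R" using a by simp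
  finally show ?thesis by (simp add: algebra_simps)
qed

lemma part2_inv:
  assumes cs: "cplx_structure J" and rep: "sc_unitary_rep J g U" and opa: "one_param_affine g"
    and V: "contraction_semigroup J V" and wr: "weyl_relations J g U V" and x: "x \<in> Dom V"
  shows "U t x \<in> Dom V \<and> gen V (U t x) = (1 / fst (g t)) *\<^sub>R U t (gen V x) - (snd (g t) / fst (g t)) *\<^sub>R J (U t x)"
proof -
  define a where "a = fst (g t)"
  define b where "b = snd (g t)"
  have a: "a > 0" using opa unfolding one_param_affine_def a_def by auto
  have un: "unitary J (U t)" using rep unfolding sc_unitary_rep_def by blast
  have bUt: "bounded_linear (U t)" and UJ: "\<And>z. U t (J z) = J (U t z)" using unitary_facts[OF un] by auto
  have V': "csg V" by (rule csg_from[OF V])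
  have lim: "((\<lambda>r. (1 / r) *\<^sub>R (smC J (exp (- (\<i> * complex_of_real (r / a * b)))) (U t (V (r / a) x)) - U t x))
       \<longlongrightarrow> (1 / a) *\<^sub>R U t (gen V x) - (b / a) *\<^sub>R J (U t x)) (at_right 0)"
    by (rule SH[OF cs V' bUt UJ a x])
  have "eventually (\<lambda>r. (1 / r) *\<^sub>R (smC J (exp (- (\<i> * complex_of_real (r / a * b)))) (U t (V (r / a) x)) - U t x)
     = dq V (U t x) r) (at_right 0)"
    using ev_pos
  proof eventually_elim
    case (elim r)
    have "U t (V (r / a) x) = smC J (exp (\<i> * complex_of_real (r / a * b))) (V (a * (r / a)) (U t x))"
      using wr elim a unfolding weyl_relations_def deriv_aff aff0 a_def b_def by simp
    then have "smC J (exp (- (\<i> * complex_of_real (r / a * b)))) (U t (V (r / a) x)) = V r (U t x)"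
      using a by (simp add: smC_mult[OF cs] mult.commute[of "exp (- _)"] exp_minus_inverse smC_simps)
    then show ?case by (simp add: dq_def)
  qed
  from Lim_transform_eventually[OF lim this] show ?thesis
    using gen_eq unfolding a_def b_def by blast
qed

lemma part2:
  fixes J :: "'h::{real_inner, complete_space} \<Rightarrow> 'h"
  assumes cs: "cplx_structure J" and rep: "sc_unitary_rep J g U" and opa: "one_param_affine g"
    and V: "contraction_semigroup J V" and gb: "generated_by J V D A" and wr: "weyl_relations J g U V"
  shows "G_invariant J g U D A"
proof -
  have V': "csg V" by (rule csg_from[OF V])
  have D: "D = Dom V" and gD: "\<And>f. f \<in> D \<Longrightarrow> gen V f = J (A f)" and AD: "\<And>f. f \<in> D \<Longrightarrow> A f = - J (gen V f)"
    using gb_facts[OF cs gb] by auto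
  have Jb: "bounded_linear J" and JJ: "\<And>x. J (J x) = - x" and Jl: "linear J" using cs_facts[OF cs] by auto
  have Jinj: "J u = J v \<Longrightarrow> u = v" for u v using JJ by (metis minus_equation_iff)
  have gadd: "x + y \<in> Dom V \<and> gen V (x + y) = gen V x + gen V y" if "x \<in> Dom V" "y \<in> Dom V" for x y
  proof (rule gen_eq)
    have "((\<lambda>s. dq V x s + dq V y s) \<longlongrightarrow> gen V x + gen V y) (at_right 0)"
      by (intro tendsto_add gen_tendsto that)
    moreover have "eventually (\<lambda>s. dq V x s + dq V y s = dq V (x + y) s) (at_right 0)"
      using ev_pos by eventually_elim (simp add: dq_lin[OF V'])
    ultimately show "(dq V (x + y) \<longlongrightarrow> gen V x + gen V y) (at_right 0)" by (rule Lim_transform_eventually)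
  qed
  have gsm: "smC J c x \<in> Dom V \<and> gen V (smC J c x) = smC J c (gen V x)" if "x \<in> Dom V" for x c
  proof (rule gen_eq)
    have "((\<lambda>s. smC J c (dq V x s)) \<longlongrightarrow> smC J c (gen V x)) (at_right 0)"
      by (intro bounded_linear.tendsto[OF smC_bl[OF cs]] gen_tendsto that)
    moreover have "eventually (\<lambda>s. smC J c (dq V x s) = dq V (smC J c x) s) (at_right 0)"
      using ev_pos
    proof eventually_elim
      case (elim s)
      then show ?case unfolding dq_def using cs_smC_V[OF V, of s c x] smC_bl[OF cs, of c]
        by (simp add: linear_simps)
    qed
    ultimately show "(dq V (smC J c x) \<longlongrightarrow> smC J c (gen V x)) (at_right 0)" by (rule Lim_transform_eventually)
  qed
  have g0: "0 \<in> Dom V"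
  proof -
    have "(dq V 0 \<longlongrightarrow> 0) (at_right 0)"
      by (rule Lim_transform_eventually[OF tendsto_const]) (use ev_pos in \<open>auto elim!: eventually_mono simp: dq_lin[OF V']\<close>)
    then show ?thesis using gen_eq by blast
  qed
  have lin: "lin_op J D A"
    unfolding lin_op_def
  proof (intro conjI ballI allI)
    show "0 \<in> D" using g0 D by simp
    fix x assume x: "x \<in> D"
    { fix y assume y: "y \<in> D"
      show "x + y \<in> D" using gadd x y D by auto
      show "A (x + y) = A x + A y" using AD[of "x + y"] AD[of x] AD[of y] gadd[of x y] x y D Jl
        by (simp add: linear_add) }
    fix c
    show "smC J c x \<in> D" using gsm x D by auto
    have "A (smC J c x) = - J (smC J c (gen V x))" using AD[of "smC J c x"] gsm[of x c] x D by auto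
    also have "\<dots> = smC J c (- J (gen V x))"
      using J_smC[OF cs] smC_bl[OF cs, of c] by (simp add: linear_simps)
    finally show "A (smC J c x) = smC J c (A x)" using AD[OF x] by simp
  qed
  have dense: "densely_defined D" unfolding densely_defined_def D by (rule dense_dom[OF V'])
  have closed: "closed_op D A"
    unfolding closed_op_def closed_sequential_limits
  proof (intro allI impI, elim conjE)
    fix p l assume pS: "\<forall>n. p n \<in> {(x, A x) |x. x \<in> D}" and pl: "p \<longlonglongrightarrow> l"
    define xn where "xn n = fst (p n)" for n
    have xn: "xn n \<in> D \<and> snd (p n) = A (xn n)" for n
    proof -
      obtain x where "p n = (x, A x)" "x \<in> D" using pS by blast
      then show ?thesis unfolding xn_def by simp
    qed
    then have xn: "xn n \<in> D" "snd (p n) = A (xn n)" for n by auto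
    have l1: "xn \<longlonglongrightarrow> fst l" unfolding xn_def by (intro tendsto_fst pl)
    have "(\<lambda>n. J (snd (p n))) \<longlonglongrightarrow> J (snd l)"
      by (intro bounded_linear.tendsto[OF Jb] tendsto_snd pl)
    then have l2: "(\<lambda>n. gen V (xn n)) \<longlonglongrightarrow> J (snd l)" using xn gD by simp
    have r: "fst l \<in> Dom V \<and> gen V (fst l) = J (snd l)"
      by (rule closed_gen[OF V' _ l1 l2]) (use xn D in auto)
    then have "A (fst l) = snd l" using gD[of "fst l"] D Jinj by auto
    then show "l \<in> {(x, A x) |x. x \<in> D}" using r D by (intro CollectI exI[of _ "fst l"]) auto
  qed
  have inv: "U t ` D = D \<and> (\<forall>f\<in>D. U t (A (inv (U t) f)) = fst (g t) *\<^sub>R A f + snd (g t) *\<^sub>R f)" for t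
  proof -
    have i2: "U t (U (- t) x) = x" for x using rep_facts[OF rep] by auto
    have un: "unitary J (U t)" using rep unfolding sc_unitary_rep_def by blast
    have bUt: "bounded_linear (U t)" and UJ: "\<And>z. U t (J z) = J (U t z)" using unitary_facts[OF un] by auto
    have a: "fst (g t) > 0" using opa unfolding one_param_affine_def by auto
    have sub: "U t ` D \<subseteq> D" using part2_inv[OF cs rep opa V wr] D by auto
    have sub2: "D \<subseteq> U t ` D"
    proof
      fix f assume f: "f \<in> D"
      then have "U (- t) f \<in> D" using part2_inv[OF cs rep opa V wr] D by auto
      then show "f \<in> U t ` D" using i2[of f] by (metis image_eqI)
    qed
    have form: "U t (A (inv (U t) f)) = fst (g t) *\<^sub>R A f + snd (g t) *\<^sub>R f" if f: "f \<in> D" for f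
    proof -
      define x where "x = U (- t) f"
      have xD: "x \<in> D" using part2_inv[OF cs rep opa V wr, of f "- t"] f D unfolding x_def by auto
      have f': "U t x = f" unfolding x_def by (rule i2)
      have "gen V f = (1 / fst (g t)) *\<^sub>R U t (gen V x) - (snd (g t) / fst (g t)) *\<^sub>R J f"
        using part2_inv[OF cs rep opa V wr, of x t] xD D f' by auto
      then have "J (A f) = (1 / fst (g t)) *\<^sub>R J (U t (A x)) - (snd (g t) / fst (g t)) *\<^sub>R J f"
        using gD f gD[OF xD] UJ by simp
      then have "J (U t (A x)) = fst (g t) *\<^sub>R J (A f) + snd (g t) *\<^sub>R J f"
        using a by (intro solve_lin) auto
      also have "\<dots> = J (fst (g t) *\<^sub>R A f + snd (g t) *\<^sub>R f)" using Jl by (simp add: linear_add linear_scale)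
      finally have "U t (A x) = fst (g t) *\<^sub>R A f + snd (g t) *\<^sub>R f" by (rule Jinj)
      then show ?thesis using rep_facts(4)[OF rep, of t] unfolding x_def by simp
    qed
    show ?thesis using sub sub2 form by auto
  qed
  show ?thesis unfolding G_invariant_def using lin dense closed inv by blast
qed

theorem theorem2p6:
  fixes J :: "'h::{real_inner, complete_space} \<Rightarrow> 'h"
    and g :: "real \<Rightarrow> real \<times> real"
    and U :: "real \<Rightarrow> 'h \<Rightarrow> 'h"
  assumes "cplx_structure J"
    and "separable_space TYPE('h)"
    and "one_param_affine g"
    and "sc_unitary_rep J g U"
  shows "(\<forall>D A V. max_dissipative J D A \<and> G_invariant J g U D A \<and>
            contraction_semigroup J V \<and> generated_by J V D A \<longrightarrow> weyl_relations J g U V)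
       \<and> (\<forall>D A V. contraction_semigroup J V \<and> generated_by J V D A \<and> weyl_relations J g U V
            \<longrightarrow> G_invariant J g U D A)"
proof (intro conjI allI impI; elim conjE)
  fix D A V
  assume "G_invariant J g U D A" "contraction_semigroup J V" "generated_by J V D A"
  then show "weyl_relations J g U V"
    unfolding weyl_relations_def using part1[OF assms(1,4,3)] by blast
next
  fix D A V
  assume "contraction_semigroup J V" "generated_by J V D A" "weyl_relations J g U V"
  then show "G_invariant J g U D A" using part2[OF assms(1,4,3)] by blast
qed

end
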